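(* Let $K$ be a field of characteristic zero and let $D$ be a simple digraph with vertex set $\{v_1,\dots,v_n\}$ and edge set $\{e_1,\dots,e_m\}$. Let $I(D,E)$ be the ideal of $K[e_1,\dots,e_m,v_1,\dots,v_n,z_1,\dots,z_n]$ generated by the binomials $e_h-z_iv_j$ for every edge $e_h=[v_i,v_j]$ of $D$, together with $z_iv_i-1$ for $i=1,\dots,n$, and let $I(E)_D=I(D,E)\cap K[e_1,\dots,e_m]$. Then $I(E)_D$ is generated by the binomials $f_C$, where $C$ ranges over the cycles of $D$.
   Context: $[v_i,v_j]$ denotes the directed edge from $v_i$ to $v_j$. A cycle of $D$ is a sequence of distinct vertices $v_{i(1)},\dots,v_{i(q)}$ ($q\ge 2$) together with distinct edges $e_{h_1},\dots,e_{h_q}$ of $D$ such that, setting $v_{i(q+1)}=v_{i(1)}$, each $e_{h_k}$ is either $[v_{i(k)},v_{i(k+1)}]$ or $[v_{i(k+1)},v_{i(k)}]$ (i.e. a cycle of the underlying undirected graph, edge directions ignored). It is a directed cycle if $e_{h_k}=[v_{i(k)},v_{i(k+1)}]$ for all $k$. For such a cycle, traversed in the given order, let $I$ be the set of indices $h_k$ with $e_{h_k}=[v_{i(k)},v_{i(k+1)}]$ (edges traversed along their direction) and $J$ the set of the remaining indices; then $f_C=\prod_{h\in I}e_h-\prod_{h\in J}e_h$ (an empty product equals $1$; so for a directed cycle $f_C=\prod_{h\in I}e_h-1$). Equivalently, $I(E)_D$ is the toric ideal, i.e. the kernel of the $K$-algebra map $K[e_1,\dots,e_m]\to K[v_1^{\pm1},\dots,v_n^{\pm1}]$,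 $e_h\mapsto v_jv_i^{-1}$ for $e_h=[v_i,v_j]$. *)

theory Defs
  imports "HOL-Library.Poly_Mapping"
begin

datatype var = Ev nat | Vv nat | Zv nat

type_synonym 'k mpoly = "(var \<Rightarrow>\<^sub>0 nat) \<Rightarrow>\<^sub>0 'k"

definition Var :: "var \<Rightarrow> 'k::comm_ring_1 mpoly" where
  "Var x = Poly_Mapping.single (Poly_Mapping.single x 1) 1"

definition poly_ring :: "var set \<Rightarrow> 'k::comm_ring_1 mpoly set" where
  "poly_ring X = {p. \<forall>mon \<in> Poly_Mapping.keys p. Poly_Mapping.keys mon \<subseteq> X}"

definition ideal_in :: "'a::comm_ring_1 set \<Rightarrow> 'a set \<Rightarrow> 'a set" where
  "ideal_in R S = {x. \<exists>F c. finite F \<and> F \<subseteq> S \<and> (\<forall>g\<in>F. c g \<in> R) \<and> x = (\<Sum>g\<in>F. c g * g)}"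

text \<open>A simple digraph on vertices 1..n with edges 1..m, edge h = (i,j) meaning e_h = [v_i,v_j].\<close>
definition simple_digraph :: "nat \<Rightarrow> nat \<Rightarrow> (nat \<Rightarrow> nat \<times> nat) \<Rightarrow> bool" where
  "simple_digraph n m edge \<longleftrightarrow>
     (\<forall>h\<in>{1..m}. fst (edge h) \<in> {1..n} \<and> snd (edge h) \<in> {1..n} \<and> fst (edge h) \<noteq> snd (edge h))
     \<and> inj_on edge {1..m}"

definition is_cycle :: "nat \<Rightarrow> nat \<Rightarrow> (nat \<Rightarrow> nat \<times> nat) \<Rightarrow> nat list \<Rightarrow> nat list \<Rightarrow> bool" where
  "is_cycle n m edge vs hs \<longleftrightarrow>
     length vs \<ge> 2 \<and> length hs = length vs \<and> distinct vs \<and> distinct hs \<and>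
     set vs \<subseteq> {1..n} \<and> set hs \<subseteq> {1..m} \<and>
     (\<forall>k<length vs. edge (hs!k) = (vs!k, vs!(Suc k mod length vs))
                   \<or> edge (hs!k) = (vs!(Suc k mod length vs), vs!k))"

definition fwd :: "(nat \<Rightarrow> nat \<times> nat) \<Rightarrow> nat list \<Rightarrow> nat list \<Rightarrow> nat \<Rightarrow> bool" where
  "fwd edge vs hs k \<longleftrightarrow> edge (hs!k) = (vs!k, vs!(Suc k mod length vs))"

definition f_C :: "(nat \<Rightarrow> nat \<times> nat) \<Rightarrow> nat list \<Rightarrow> nat list \<Rightarrow> 'k::comm_ring_1 mpoly" where
  "f_C edge vs hs =
     (\<Prod>k\<in>{k. k < length vs \<and> fwd edge vs hs k}. Var (Ev (hs!k)))
   - (\<Prod>k\<in>{k. k < length vs \<and> \<not> fwd edge vs hs k}. Var (Ev (hs!k)))"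

definition full_vars :: "nat \<Rightarrow> nat \<Rightarrow> var set" where
  "full_vars n m = Ev ` {1..m} \<union> Vv ` {1..n} \<union> Zv ` {1..n}"

definition I_DE :: "nat \<Rightarrow> nat \<Rightarrow> (nat \<Rightarrow> nat \<times> nat) \<Rightarrow> 'k::comm_ring_1 mpoly set" where
  "I_DE n m edge = ideal_in (poly_ring (full_vars n m))
     ({Var (Ev h) - Var (Zv (fst (edge h))) * Var (Vv (snd (edge h))) | h. h \<in> {1..m}}
      \<union> {Var (Zv i) * Var (Vv i) - 1 | i. i \<in> {1..n}})"

definition I_E_D :: "nat \<Rightarrow> nat \<Rightarrow> (nat \<Rightarrow> nat \<times> nat) \<Rightarrow> 'k::comm_ring_1 mpoly set" where
  "I_E_D n m edge = I_DE n m edge \<inter> poly_ring (Ev ` {1..m})"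

end

theory Submission
  imports Defs
begin

definition subr :: "'a::comm_ring_1 set \<Rightarrow> bool" where
  "subr R \<longleftrightarrow> 0 \<in> R \<and> 1 \<in> R \<and> (\<forall>x\<in>R. \<forall>y\<in>R. x + y \<in> R \<and> x * y \<in> R) \<and> (\<forall>x\<in>R. - x \<in> R)"

lemma subr_0: "subr R \<Longrightarrow> 0 \<in> R" and subr_1: "subr R \<Longrightarrow> 1 \<in> R"
  and subr_add: "subr R \<Longrightarrow> x \<in> R \<Longrightarrow> y \<in> R \<Longrightarrow> x + y \<in> R"
  and subr_mult: "subr R \<Longrightarrow> x \<in> R \<Longrightarrow> y \<in> R \<Longrightarrow> x * y \<in> R"
  and subr_uminus: "subr R \<Longrightarrow> x \<in> R \<Longrightarrow> - x \<in> R"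
  by (auto simp: subr_def)

lemma subr_diff: "subr R \<Longrightarrow> x \<in> R \<Longrightarrow> y \<in> R \<Longrightarrow> x - y \<in> R"
  using subr_add[of R x "-y"] subr_uminus[of R y] by simp

lemma subr_power: "subr R \<Longrightarrow> x \<in> R \<Longrightarrow> x ^ k \<in> R"
  by (induction k) (auto intro: subr_1 subr_mult)

lemma subr_prod: "subr R \<Longrightarrow> (\<And>i. i \<in> A \<Longrightarrow> f i \<in> R) \<Longrightarrow> prod f A \<in> R"
  by (induction A rule: infinite_finite_induct) (auto intro: subr_1 subr_mult)

lemma subr_sum: "subr R \<Longrightarrow> (\<And>i. i \<in> A \<Longrightarrow> f i \<in> R) \<Longrightarrow> sum f A \<in> R"
  by (induction A rule: infinite_finite_induct) (auto intro: subr_0 subr_add)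

lemma ideal_zero: "0 \<in> ideal_in R S"
  unfolding ideal_in_def by (rule CollectI, rule exI[of _ "{}"]) auto

lemma ideal_add:
  assumes R: "subr R" and x: "x \<in> ideal_in R S" and y: "y \<in> ideal_in R S"
  shows "x + y \<in> ideal_in R S"
proof -
  obtain F c where F: "finite F" "F \<subseteq> S" "\<forall>g\<in>F. c g \<in> R" "x = (\<Sum>g\<in>F. c g * g)"
    using x unfolding ideal_in_def by blast
  obtain F' d where F': "finite F'" "F' \<subseteq> S" "\<forall>g\<in>F'. d g \<in> R" "y = (\<Sum>g\<in>F'. d g * g)"
    using y unfolding ideal_in_def by blast
  define e where "e g = (if g \<in> F then c g else 0) + (if g \<in> F' then d g else 0)" for g
  have "(\<Sum>g\<in>F \<union> F'. e g * g) = (\<Sum>g\<in>F \<union> F'. (if g \<in> F then c g * g else 0)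
          + (if g \<in> F' then d g * g else 0))"
    by (rule sum.cong) (auto simp: e_def distrib_right)
  also have "\<dots> = (\<Sum>g\<in>F \<union> F'. (if g \<in> F then c g * g else 0))
          + (\<Sum>g\<in>F \<union> F'. (if g \<in> F' then d g * g else 0))"
    by (rule sum.distrib)
  also have "(\<Sum>g\<in>F \<union> F'. (if g \<in> F then c g * g else 0)) = (\<Sum>g\<in>F. c g * g)"
    by (rule sum.mono_neutral_cong_right) (use F(1) F'(1) in auto)
  also have "(\<Sum>g\<in>F \<union> F'. (if g \<in> F' then d g * g else 0)) = (\<Sum>g\<in>F'. d g * g)"
    by (rule sum.mono_neutral_cong_right) (use F(1) F'(1) in auto)
  finally have "x + y = (\<Sum>g\<in>F \<union> F'. e g * g)" using F F' by simp
  moreover have "\<forall>g\<in>F \<union> F'. e g \<in> R"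
    using F F' R unfolding e_def by (auto intro!: subr_add subr_0)
  ultimately show ?thesis unfolding ideal_in_def using F F'
    by (intro CollectI exI[of _ "F \<union> F'"] exI[of _ e]) auto
qed

lemma ideal_mult:
  assumes R: "subr R" and r: "r \<in> R" and x: "x \<in> ideal_in R S"
  shows "r * x \<in> ideal_in R S"
proof -
  obtain F c where F: "finite F" "F \<subseteq> S" "\<forall>g\<in>F. c g \<in> R" "x = (\<Sum>g\<in>F. c g * g)"
    using x unfolding ideal_in_def by blast
  have "r * x = (\<Sum>g\<in>F. (r * c g) * g)" using F(4) by (simp add: sum_distrib_left mult.assoc)
  then show ?thesis unfolding ideal_in_def using F R r
    by (intro CollectI exI[of _ F] exI[of _ "\<lambda>g. r * c g"]) (auto intro: subr_mult)
qed

lemma ideal_gen: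
  assumes R: "subr R" and g: "g \<in> S"
  shows "g \<in> ideal_in R S"
  unfolding ideal_in_def using g subr_1[OF R]
  by (intro CollectI exI[of _ "{g}"] exI[of _ "\<lambda>_. 1"]) auto

lemma ideal_uminus:
  assumes R: "subr R" and x: "x \<in> ideal_in R S"
  shows "- x \<in> ideal_in R S"
  using ideal_mult[OF R subr_uminus[OF R subr_1[OF R]] x] by simp

lemma ideal_diff:
  assumes R: "subr R" and x: "x \<in> ideal_in R S" and y: "y \<in> ideal_in R S"
  shows "x - y \<in> ideal_in R S"
  using ideal_add[OF R x ideal_uminus[OF R y]] by simp

lemma ideal_sum:
  assumes R: "subr R" shows "(\<And>i. i \<in> A \<Longrightarrow> f i \<in> ideal_in R S) \<Longrightarrow> sum f A \<in> ideal_in R S"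
  by (induction A rule: infinite_finite_induct) (auto intro: ideal_zero ideal_add[OF R])

lemma ideal_in_mono:
  assumes R': "subr R'" and sub: "R \<subseteq> R'" and gens: "S \<subseteq> ideal_in R' S'"
  shows "ideal_in R S \<subseteq> ideal_in R' S'"
proof
  fix x assume "x \<in> ideal_in R S"
  then obtain F c where F: "finite F" "F \<subseteq> S" "\<forall>g\<in>F. c g \<in> R" "x = (\<Sum>g\<in>F. c g * g)"
    unfolding ideal_in_def by blast
  show "x \<in> ideal_in R' S'" unfolding F(4)
    by (rule ideal_sum[OF R'], rule ideal_mult[OF R']) (use F sub gens in auto)
qed

lemma ideal_in_sub:
  assumes R: "subr R" and S: "S \<subseteq> R"
  shows "ideal_in R S \<subseteq> R"
proof
  fix x assume "x \<in> ideal_in R S"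
  then obtain F c where F: "finite F" "F \<subseteq> S" "\<forall>g\<in>F. c g \<in> R" "x = (\<Sum>g\<in>F. c g * g)"
    unfolding ideal_in_def by blast
  show "x \<in> R" unfolding F(4)
    by (rule subr_sum[OF R], rule subr_mult[OF R]) (use F S in auto)
qed

lemma cong_mult:
  assumes R: "subr R" and "x \<in> R" "y' \<in> R"
    and "x - y \<in> ideal_in R S" "x' - y' \<in> ideal_in R S"
  shows "x * x' - y * y' \<in> ideal_in R S"
proof -
  have "x * x' - y * y' = x * (x' - y') + y' * (x - y)" by (simp add: algebra_simps)
  then show ?thesis using assms by (auto intro!: ideal_add ideal_mult)
qed

lemma cong_power:
  assumes R: "subr R" and "x \<in> R" "y \<in> R" "x - y \<in> ideal_in R S"
  shows "x ^ k - y ^ k \<in> ideal_in R S"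
proof (induction k)
  case 0 then show ?case by (simp add: ideal_zero)
next
  case (Suc k)
  have "x * x ^ k - y * y ^ k \<in> ideal_in R S"
    by (rule cong_mult[OF R]) (use assms Suc subr_power[OF R] in auto)
  then show ?case by simp
qed

lemma cong_prod:
  fixes u w :: "'b \<Rightarrow> 'a::comm_ring_1"
  assumes R: "subr R"
  shows "(\<And>i. i \<in> A \<Longrightarrow> u i \<in> R \<and> w i \<in> R \<and> u i - w i \<in> ideal_in R S)
     \<Longrightarrow> prod u A - prod w A \<in> ideal_in R S"
proof (induction A rule: infinite_finite_induct)
  case (insert a A)
  have "u a * prod u A - w a * prod w A \<in> ideal_in R S"
    by (rule cong_mult[OF R]) (use insert subr_prod[OF R, of A w] in auto)
  then show ?case using insert by simp
qed (auto simp: ideal_zero)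

lemma cong_trans:
  assumes R: "subr R" "x - y \<in> ideal_in R S" "y - z \<in> ideal_in R S"
  shows "x - z \<in> ideal_in R S"
  using ideal_add[OF assms] by simp

lemma cong_sym:
  assumes R: "subr R" "x - y \<in> ideal_in R S"
  shows "y - x \<in> ideal_in R S"
  using ideal_uminus[OF assms] by simp

lemma subr_poly_ring: "subr (poly_ring X)"
proof -
  have add: "p + q \<in> poly_ring X" if "p \<in> poly_ring X" "q \<in> poly_ring X" for p q :: "'k::comm_ring_1 mpoly"
    using that keys_add[of p q] unfolding poly_ring_def by blast
  have mult: "p * q \<in> poly_ring X" if "p \<in> poly_ring X" "q \<in> poly_ring X" for p q :: "'k::comm_ring_1 mpoly"
  proof -
    have "Poly_Mapping.keys mon \<subseteq> X" if "mon \<in> Poly_Mapping.keys (p * q)" for mon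
    proof -
      obtain a b where "a \<in> Poly_Mapping.keys p" "b \<in> Poly_Mapping.keys q" "mon = a + b"
        using keys_mult[of p q] \<open>mon \<in> _\<close> by blast
      then show ?thesis using \<open>p \<in> _\<close> \<open>q \<in> _\<close> keys_add[of a b] unfolding poly_ring_def by blast
    qed
    then show ?thesis unfolding poly_ring_def by blast
  qed
  have one: "(1::'k::comm_ring_1 mpoly) \<in> poly_ring X"
    by (simp add: poly_ring_def)
  have zero: "(0::'k::comm_ring_1 mpoly) \<in> poly_ring X"
    by (simp add: poly_ring_def)
  have neg: "- p \<in> poly_ring X" if "p \<in> poly_ring X" for p :: "'k::comm_ring_1 mpoly"
    using that by (simp add: poly_ring_def)
  show ?thesis unfolding subr_def using add mult one zero neg by blast
qed

lemma Var_in_poly_ring: "x \<in> X \<Longrightarrow> Var x \<in> poly_ring X"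
  by (auto simp: poly_ring_def Var_def)

lemma poly_ring_mono: "X \<subseteq> Y \<Longrightarrow> poly_ring X \<subseteq> poly_ring Y"
  by (auto simp: poly_ring_def)

lemma single0_in_poly_ring: "Poly_Mapping.single 0 c \<in> poly_ring X"
  by (auto simp: poly_ring_def)

lemma pm_expand: "(\<Sum>a\<in>Poly_Mapping.keys p. Poly_Mapping.single a (Poly_Mapping.lookup p a)) = p"
proof (rule poly_mapping_eqI)
  fix k
  show "Poly_Mapping.lookup (\<Sum>a\<in>Poly_Mapping.keys p. Poly_Mapping.single a (Poly_Mapping.lookup p a)) k
        = Poly_Mapping.lookup p k"
    by (simp add: lookup_sum lookup_single when_def in_keys_iff sum.delta)
qed

definition Phi :: "('a \<Rightarrow> 'b) \<Rightarrow> ('a \<Rightarrow>\<^sub>0 'c::comm_monoid_add) \<Rightarrow> ('b \<Rightarrow>\<^sub>0 'c)" where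
  "Phi \<sigma> p = (\<Sum>a\<in>Poly_Mapping.keys p. Poly_Mapping.single (\<sigma> a) (Poly_Mapping.lookup p a))"

lemma Phi_add: "Phi \<sigma> (p + q) = Phi \<sigma> p + Phi \<sigma> q"
  unfolding Phi_def by (rule setsum_keys_plus_distrib) (auto simp: single_add)

lemma Phi_zero [simp]: "Phi \<sigma> 0 = 0"
  by (simp add: Phi_def)

lemma Phi_single [simp]: "Phi \<sigma> (Poly_Mapping.single a c) = Poly_Mapping.single (\<sigma> a) c"
  by (cases "c = 0") (auto simp: Phi_def)

lemma Phi_sum: "Phi \<sigma> (sum f A) = (\<Sum>i\<in>A. Phi \<sigma> (f i))"
  by (induction A rule: infinite_finite_induct) (auto simp: Phi_add)

lemma Phi_uminus: "Phi \<sigma> (- p) = - Phi \<sigma> (p :: 'a \<Rightarrow>\<^sub>0 'c::ab_group_add)"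
proof -
  have "Phi \<sigma> p + Phi \<sigma> (-p) = 0" using Phi_add[of \<sigma> p "-p"] by simp
  from minus_unique[OF this] show ?thesis by simp
qed

lemma Phi_diff: "Phi \<sigma> (p - q) = Phi \<sigma> p - Phi \<sigma> (q :: 'a \<Rightarrow>\<^sub>0 'c::ab_group_add)"
  using Phi_add[of \<sigma> p "-q"] Phi_uminus[of \<sigma> q] by simp

lemma Phi_mult:
  fixes \<sigma> :: "'a::comm_monoid_add \<Rightarrow> 'b::comm_monoid_add"
  assumes hom: "\<And>a b. \<sigma> (a + b) = \<sigma> a + \<sigma> b"
  shows "Phi \<sigma> (p * q) = Phi \<sigma> p * Phi \<sigma> (q :: 'a \<Rightarrow>\<^sub>0 'c::comm_ring_1)"
proof -
  let ?P = "Poly_Mapping.keys p" and ?Q = "Poly_Mapping.keys q"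
  have "p * q = (\<Sum>a\<in>?P. Poly_Mapping.single a (Poly_Mapping.lookup p a))
              * (\<Sum>b\<in>?Q. Poly_Mapping.single b (Poly_Mapping.lookup q b))"
    by (simp add: pm_expand)
  also have "\<dots> = (\<Sum>a\<in>?P. \<Sum>b\<in>?Q. Poly_Mapping.single (a + b) (Poly_Mapping.lookup p a * Poly_Mapping.lookup q b))"
    by (simp add: sum_product mult_single)
  finally have pq: "p * q = \<dots>" .
  have "Phi \<sigma> (p * q) = (\<Sum>a\<in>?P. \<Sum>b\<in>?Q. Poly_Mapping.single (\<sigma> a + \<sigma> b) (Poly_Mapping.lookup p a * Poly_Mapping.lookup q b))"
    unfolding pq by (simp add: Phi_sum hom)
  also have "\<dots> = Phi \<sigma> p * Phi \<sigma> q"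
    unfolding Phi_def by (simp add: sum_product mult_single)
  finally show ?thesis .
qed

lemma Phi_one:
  assumes "\<sigma> 0 = 0"
  shows "Phi \<sigma> (1 :: 'a::zero \<Rightarrow>\<^sub>0 'c::{comm_monoid_add,zero_neq_one}) = (1 :: 'b::zero \<Rightarrow>\<^sub>0 'c)"
  using assms by (simp add: Phi_def)

definition indeg :: "(nat \<Rightarrow> nat \<times> nat) \<Rightarrow> nat \<Rightarrow> (nat \<Rightarrow> nat) \<Rightarrow> nat \<Rightarrow> nat" where
  "indeg edge m \<alpha> v = (\<Sum>h\<in>{h\<in>{1..m}. snd (edge h) = v}. \<alpha> h)"

definition outdeg :: "(nat \<Rightarrow> nat \<times> nat) \<Rightarrow> nat \<Rightarrow> (nat \<Rightarrow> nat) \<Rightarrow> nat \<Rightarrow> nat" where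
  "outdeg edge m \<alpha> v = (\<Sum>h\<in>{h\<in>{1..m}. fst (edge h) = v}. \<alpha> h)"

definition balanced :: "(nat \<Rightarrow> nat \<times> nat) \<Rightarrow> nat \<Rightarrow> (nat \<Rightarrow> nat) \<Rightarrow> (nat \<Rightarrow> nat) \<Rightarrow> bool" where
  "balanced edge m \<alpha> \<beta> \<longleftrightarrow> (\<forall>v. indeg edge m \<alpha> v + outdeg edge m \<beta> v = indeg edge m \<beta> v + outdeg edge m \<alpha> v)"

definition Emon :: "nat \<Rightarrow> (nat \<Rightarrow> nat) \<Rightarrow> 'k::comm_ring_1 mpoly" where
  "Emon m \<alpha> = (\<Prod>h\<in>{1..m}. Var (Ev h) ^ \<alpha> h)"

lemma prod_regroup:
  fixes X :: "'b \<Rightarrow> 'c::comm_monoid_mult"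
  assumes "finite A" "finite B" "g ` A \<subseteq> B"
  shows "(\<Prod>h\<in>A. X (g h) ^ c h) = (\<Prod>v\<in>B. X v ^ (\<Sum>h\<in>{h\<in>A. g h = v}. c h))"
proof -
  have "(\<Prod>v\<in>B. X v ^ (\<Sum>h\<in>{h\<in>A. g h = v}. c h)) = (\<Prod>v\<in>B. \<Prod>h\<in>{h\<in>A. g h = v}. X (g h) ^ c h)"
    by (rule prod.cong) (auto simp: power_sum)
  also have "\<dots> = (\<Prod>h\<in>A. X (g h) ^ c h)"
    by (rule prod.group) (use assms in auto)
  finally show ?thesis by simp
qed

context
  fixes n m :: nat and edge :: "nat \<Rightarrow> nat \<times> nat"
  assumes simple: "simple_digraph n m edge"
begin

lemma edge_range:
  assumes "h \<in> {1..m}"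
  shows "fst (edge h) \<in> {1..n}" "snd (edge h) \<in> {1..n}" "fst (edge h) \<noteq> snd (edge h)"
  using simple assms unfolding simple_digraph_def by auto

lemma D1:
  assumes bal: "balanced edge m \<alpha> \<beta>"
  shows "(Emon m \<alpha> :: 'k::comm_ring_1 mpoly) - Emon m \<beta> \<in> I_DE n m edge"
proof -
  let ?R = "poly_ring (full_vars n m) :: 'k mpoly set"
  let ?S = "{Var (Ev h) - Var (Zv (fst (edge h))) * Var (Vv (snd (edge h))) | h. h \<in> {1..m}}
      \<union> {Var (Zv i) * Var (Vv i) - 1 | i. i \<in> {1..n}} :: 'k mpoly set"
  let ?I = "ideal_in ?R ?S"
  have I: "I_DE n m edge = ?I" by (simp add: I_DE_def)
  have R: "subr ?R" by (rule subr_poly_ring)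
  define Z where "Z i = (Var (Zv i) :: 'k mpoly)" for i
  define V where "V i = (Var (Vv i) :: 'k mpoly)" for i
  define E where "E h = (Var (Ev h) :: 'k mpoly)" for h
  have ZR: "Z i \<in> ?R" if "i \<in> {1..n}" for i
    using that unfolding Z_def by (intro Var_in_poly_ring) (auto simp: full_vars_def)
  have VR: "V i \<in> ?R" if "i \<in> {1..n}" for i
    using that unfolding V_def by (intro Var_in_poly_ring) (auto simp: full_vars_def)
  have ER: "E h \<in> ?R" if "h \<in> {1..m}" for h
    using that unfolding E_def by (intro Var_in_poly_ring) (auto simp: full_vars_def)
  have gen1: "E h - Z (fst (edge h)) * V (snd (edge h)) \<in> ?I" if "h \<in> {1..m}" for h
    by (rule ideal_gen[OF R]) (use that in \<open>auto simp: E_def Z_def V_def\<close>)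
  have gen2: "Z i * V i - 1 \<in> ?I" if "i \<in> {1..n}" for i
    by (rule ideal_gen[OF R]) (use that in \<open>auto simp: Z_def V_def\<close>)
  define P where "P \<gamma> = (\<Prod>h\<in>{1..m}. (Z (fst (edge h)) * V (snd (edge h))) ^ \<gamma> h)" for \<gamma>
  define W where "W \<gamma> = (\<Prod>h\<in>{1..m}. (Z (fst (edge h)) * V (fst (edge h))) ^ \<gamma> h)" for \<gamma>
  have ZVR: "Z (fst (edge h)) * V (snd (edge h)) \<in> ?R" "Z (fst (edge h)) * V (fst (edge h)) \<in> ?R"
    if "h \<in> {1..m}" for h
    using that edge_range[OF that] by (auto intro!: subr_mult[OF R] ZR VR)
  have PR: "P \<gamma> \<in> ?R" for \<gamma>
    unfolding P_def by (intro subr_prod[OF R] subr_power[OF R] ZVR)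
  have WR: "W \<gamma> \<in> ?R" for \<gamma>
    unfolding W_def by (intro subr_prod[OF R] subr_power[OF R] ZVR)
  have EmR: "Emon m \<gamma> \<in> ?R" for \<gamma>
    unfolding Emon_def by (intro subr_prod[OF R] subr_power[OF R] ER[unfolded E_def])
  have EP: "Emon m \<gamma> - P \<gamma> \<in> ?I" for \<gamma>
  proof -
    have "Var (Ev h) ^ k - (Z (fst (edge h)) * V (snd (edge h))) ^ k \<in> ?I" if "h \<in> {1..m}" for h k
      using cong_power[OF R ER[OF that] ZVR(1)[OF that] gen1[OF that]] unfolding E_def .
    then show ?thesis
      unfolding Emon_def P_def
      by (intro cong_prod[OF R] conjI subr_power[OF R] ER[unfolded E_def] ZVR) auto
  qed
  have W1: "W \<gamma> - 1 \<in> ?I" for \<gamma>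
  proof -
    have "(Z (fst (edge h)) * V (fst (edge h))) ^ k - 1 ^ k \<in> ?I" if "h \<in> {1..m}" for h k
      by (rule cong_power[OF R ZVR(2)[OF that] subr_1[OF R] gen2[OF edge_range(1)[OF that]]])
    then have "W \<gamma> - (\<Prod>h\<in>{1..m}. 1 ^ \<gamma> h) \<in> ?I"
      unfolding W_def
      by (intro cong_prod[OF R] conjI subr_power[OF R] ZVR subr_1[OF R]) auto
    then show ?thesis by simp
  qed
  have fin: "finite {1..m}" "finite {1..n}" by auto
  have img1: "(\<lambda>h. snd (edge h)) ` {1..m} \<subseteq> {1..n}" and img2: "(\<lambda>h. fst (edge h)) ` {1..m} \<subseteq> {1..n}"
    using edge_range by auto
  have Vin: "(\<Prod>h\<in>{1..m}. V (snd (edge h)) ^ \<gamma> h) = (\<Prod>v\<in>{1..n}. V v ^ indeg edge m \<gamma> v)" for \<gamma>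
    unfolding indeg_def by (rule prod_regroup[OF fin img1])
  have Vout: "(\<Prod>h\<in>{1..m}. V (fst (edge h)) ^ \<gamma> h) = (\<Prod>v\<in>{1..n}. V v ^ outdeg edge m \<gamma> v)" for \<gamma>
    unfolding outdeg_def by (rule prod_regroup[OF fin img2])
  define ZZ where "ZZ \<gamma> = (\<Prod>h\<in>{1..m}. Z (fst (edge h)) ^ \<gamma> h)" for \<gamma>
  have Pdec: "P \<gamma> = ZZ \<gamma> * (\<Prod>v\<in>{1..n}. V v ^ indeg edge m \<gamma> v)" for \<gamma>
    unfolding P_def ZZ_def Vin[symmetric] by (simp add: power_mult_distrib prod.distrib)
  have Wdec: "W \<gamma> = ZZ \<gamma> * (\<Prod>v\<in>{1..n}. V v ^ outdeg edge m \<gamma> v)" for \<gamma>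
    unfolding W_def ZZ_def Vout[symmetric] by (simp add: power_mult_distrib prod.distrib)
  have eq: "P \<alpha> * W \<beta> = P \<beta> * W \<alpha>"
  proof -
    have "P \<alpha> * W \<beta> = ZZ \<alpha> * ZZ \<beta> * (\<Prod>v\<in>{1..n}. V v ^ (indeg edge m \<alpha> v + outdeg edge m \<beta> v))"
      unfolding Pdec Wdec by (simp add: power_add prod.distrib mult_ac)
    also have "\<dots> = ZZ \<alpha> * ZZ \<beta> * (\<Prod>v\<in>{1..n}. V v ^ (indeg edge m \<beta> v + outdeg edge m \<alpha> v))"
      using bal unfolding balanced_def by simp
    also have "\<dots> = P \<beta> * W \<alpha>"
      unfolding Pdec Wdec by (simp add: power_add prod.distrib mult_ac)
    finally show ?thesis .
  qed
  have "Emon m \<alpha> - Emon m \<beta> = (Emon m \<alpha> - P \<alpha>) - (Emon m \<beta> - P \<beta>) - P \<alpha> * (W \<beta> - 1) + P \<beta> * (W \<alpha> - 1)"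
    using eq by (simp add: algebra_simps)
  also have "\<dots> \<in> ?I"
    by (intro ideal_add[OF R] ideal_diff[OF R] ideal_mult[OF R] EP W1 PR)
  finally show ?thesis unfolding I .
qed

end

definition gam :: "nat list \<Rightarrow> nat set \<Rightarrow> nat \<Rightarrow> nat" where
  "gam hs K h = (if h \<in> (\<lambda>k. hs!k) ` K then 1 else 0)"

lemma Emon_gam:
  assumes "distinct hs" "set hs \<subseteq> {1..m}" "K \<subseteq> {..<length hs}"
  shows "(Emon m (gam hs K) :: 'k::comm_ring_1 mpoly) = (\<Prod>k\<in>K. Var (Ev (hs!k)))"
proof -
  let ?B = "(\<lambda>k. hs!k) ` K"
  have "hs!k \<in> {1..m}" if "k \<in> K" for k
    using that assms(2,3) nth_mem[of k hs] by blast
  then have B: "?B \<subseteq> {1..m}" by blast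
  have "(Emon m (gam hs K) :: 'k mpoly) = (\<Prod>h\<in>{1..m}. if h \<in> ?B then Var (Ev h) else 1)"
    unfolding Emon_def gam_def by (rule prod.cong) simp_all
  also have "\<dots> = (\<Prod>h\<in>{1..m} \<inter> ?B. Var (Ev h))"
    by (rule prod.inter_restrict[symmetric]) simp
  also have "{1..m} \<inter> ?B = ?B" using B by blast
  also have "(\<Prod>h\<in>?B. Var (Ev h)) = (\<Prod>k\<in>K. (Var (Ev (hs!k)) :: 'k mpoly))"
    by (rule prod.reindex[unfolded comp_def], rule inj_on_nth) (use assms in auto)
  finally show ?thesis .
qed

lemma sum_gam:
  assumes "distinct hs" "set hs \<subseteq> {1..m}" "K \<subseteq> {..<length hs}"
  shows "(\<Sum>h\<in>{h\<in>{1..m}. P h}. gam hs K h) = (\<Sum>k\<in>K. if P (hs!k) then 1 else 0)"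
proof -
  let ?B = "(\<lambda>k. hs!k) ` K"
  have "hs!k \<in> {1..m}" if "k \<in> K" for k
    using that assms(2,3) nth_mem[of k hs] by blast
  then have B: "?B \<subseteq> {1..m}" by blast
  have "(\<Sum>h\<in>{h\<in>{1..m}. P h}. gam hs K h) = (\<Sum>h\<in>{1..m}. if h \<in> ?B then (if P h then 1 else 0) else 0)"
    unfolding sum.inter_filter[OF finite_atLeastAtMost] by (rule sum.cong) (simp_all add: gam_def)
  also have "\<dots> = (\<Sum>h\<in>{1..m} \<inter> ?B. if P h then 1 else 0)"
    by (rule sum.inter_restrict[symmetric]) simp
  also have "{1..m} \<inter> ?B = ?B" using B by blast
  also have "(\<Sum>h\<in>?B. if P h then 1 else 0) = (\<Sum>k\<in>K. if P (hs!k) then 1 else (0::nat))"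
    by (rule sum.reindex[unfolded comp_def], rule inj_on_nth) (use assms in auto)
  finally show ?thesis .
qed

lemma bij_suc_mod:
  assumes "0 < q"
  shows "bij_betw (\<lambda>k. Suc k mod q) {..<q} {..<q}"
proof -
  have inj: "inj_on (\<lambda>k. Suc k mod q) {..<q}"
  proof
    fix a b assume "a \<in> {..<q}" "b \<in> {..<q}" "Suc a mod q = Suc b mod q"
    then show "a = b"
    proof (cases "Suc a = q")
      case True
      then show ?thesis using \<open>Suc a mod q = Suc b mod q\<close> \<open>b \<in> {..<q}\<close>
        by (cases "Suc b = q") auto
    next
      case False
      then show ?thesis using \<open>Suc a mod q = Suc b mod q\<close> \<open>a \<in> {..<q}\<close> \<open>b \<in> {..<q}\<close>
        by (cases "Suc b = q") auto
    qed
  qed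
  moreover have "(\<lambda>k. Suc k mod q) ` {..<q} = {..<q}"
    by (rule endo_inj_surj) (use inj assms in auto)
  ultimately show ?thesis by (simp add: bij_betw_def)
qed

definition Kp :: "(nat \<Rightarrow> nat \<times> nat) \<Rightarrow> nat list \<Rightarrow> nat list \<Rightarrow> nat set" where
  "Kp edge vs hs = {k. k < length vs \<and> fwd edge vs hs k}"
definition Km :: "(nat \<Rightarrow> nat \<times> nat) \<Rightarrow> nat list \<Rightarrow> nat list \<Rightarrow> nat set" where
  "Km edge vs hs = {k. k < length vs \<and> \<not> fwd edge vs hs k}"

lemma cycle_fC:
  assumes cyc: "is_cycle n m edge vs hs"
  shows "(f_C edge vs hs :: 'k::comm_ring_1 mpoly)
          = Emon m (gam hs (Kp edge vs hs)) - Emon m (gam hs (Km edge vs hs))"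
proof -
  have c: "distinct hs" "set hs \<subseteq> {1..m}" "length hs = length vs"
    using cyc unfolding is_cycle_def by auto
  show ?thesis unfolding f_C_def
    by (subst (1 2) Emon_gam) (use c in \<open>auto simp: Kp_def Km_def\<close>)
qed

lemma cycle_balanced:
  assumes cyc: "is_cycle n m edge vs hs"
  shows "balanced edge m (gam hs (Kp edge vs hs)) (gam hs (Km edge vs hs))"
proof -
  let ?q = "length vs"
  let ?S = "\<lambda>k. Suc k mod ?q"
  let ?P = "Kp edge vs hs" and ?M = "Km edge vs hs"
  have c: "distinct hs" "set hs \<subseteq> {1..m}" "length hs = length vs" "?q \<ge> 2"
    using cyc unfolding is_cycle_def by auto
  have PM: "?P \<subseteq> {..<length hs}" "?M \<subseteq> {..<length hs}" using c by (auto simp: Kp_def Km_def)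
  have Pe: "edge (hs!k) = (vs!k, vs!(?S k))" if "k \<in> ?P" for k
    using that by (auto simp: Kp_def fwd_def)
  have Me: "edge (hs!k) = (vs!(?S k), vs!k)" if "k \<in> ?M" for k
    using that cyc unfolding Km_def fwd_def is_cycle_def by auto
  have un: "?P \<union> ?M = {..<?q}" "?P \<inter> ?M = {}" by (auto simp: Kp_def Km_def)
  have fin: "finite ?P" "finite ?M" by (auto simp: Kp_def Km_def)
  have split: "(\<Sum>k\<in>?P. f k) + (\<Sum>k\<in>?M. f k) = (\<Sum>k<?q. f k)" for f :: "nat \<Rightarrow> nat"
    using sum.union_disjoint[OF fin un(2), of f] un(1) by simp
  show ?thesis unfolding balanced_def
  proof
    fix v
    have "indeg edge m (gam hs ?P) v + outdeg edge m (gam hs ?M) v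
        = (\<Sum>k\<in>?P. if vs!(?S k) = v then 1 else 0) + (\<Sum>k\<in>?M. if vs!(?S k) = v then 1 else 0)"
      unfolding indeg_def outdeg_def sum_gam[OF c(1,2) PM(1)] sum_gam[OF c(1,2) PM(2)]
      by (intro arg_cong2[where f="(+)"] sum.cong) (simp_all add: Pe Me)
    also have "\<dots> = (\<Sum>k<?q. if vs!(?S k) = v then 1 else 0)" by (rule split)
    also have "\<dots> = (\<Sum>k<?q. if vs!k = v then 1 else 0)"
      by (rule sum.reindex_bij_betw[OF bij_suc_mod]) (use c in auto)
    also have "\<dots> = (\<Sum>k\<in>?M. if vs!k = v then 1 else 0) + (\<Sum>k\<in>?P. if vs!k = v then 1 else 0)"
      using split by (simp add: add.commute)
    also have "\<dots> = indeg edge m (gam hs ?M) v + outdeg edge m (gam hs ?P) v"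
      unfolding indeg_def outdeg_def sum_gam[OF c(1,2) PM(1)] sum_gam[OF c(1,2) PM(2)]
      by (intro arg_cong2[where f="(+)"] sum.cong) (simp_all add: Pe Me)
    finally show "indeg edge m (gam hs ?P) v + outdeg edge m (gam hs ?M) v
        = indeg edge m (gam hs ?M) v + outdeg edge m (gam hs ?P) v" .
  qed
qed

context
  fixes n m :: nat and edge :: "nat \<Rightarrow> nat \<times> nat"
  assumes simple: "simple_digraph n m edge"
begin

lemma cycle_exists:
  assumes disj: "\<forall>h\<in>{1..m}. \<alpha> h = 0 \<or> \<beta> h = 0"
    and diff: "\<exists>h\<in>{1..m}. \<alpha> h \<noteq> \<beta> h"
    and bal: "balanced edge m \<alpha> \<beta>"
  shows "\<exists>vs hs. is_cycle n m edge vs hs \<and> (\<forall>k\<in>Kp edge vs hs. 0 < \<alpha> (hs!k))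
                  \<and> (\<forall>k\<in>Km edge vs hs. 0 < \<beta> (hs!k))"
proof -
  define arc where "arc u w h \<longleftrightarrow> h \<in> {1..m} \<and> ((0 < \<alpha> h \<and> edge h = (u,w)) \<or> (0 < \<beta> h \<and> edge h = (w,u)))"
    for u w h
  have arc_range: "u \<in> {1..n} \<and> w \<in> {1..n} \<and> u \<noteq> w" if "arc u w h" for u w h
  proof -
    have h: "h \<in> {1..m}" using that by (simp add: arc_def)
    from edge_range[OF simple h] that show ?thesis unfolding arc_def
      by (metis fst_conv snd_conv)
  qed
  have arc_tail: "u = u'" if "arc u w h" "arc u' w' h" for u w u' w' h
  proof -
    have h: "h \<in> {1..m}" using that by (simp add: arc_def)
    show ?thesis
    proof (cases "0 < \<alpha> h")
      case True
      then have "\<beta> h = 0" using disj h by force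
      then show ?thesis using that True unfolding arc_def by auto
    next
      case False
      then show ?thesis using that unfolding arc_def by auto
    qed
  qed
  have start: "\<exists>u w h. arc u w h"
  proof -
    obtain h where h: "h \<in> {1..m}" "\<alpha> h \<noteq> \<beta> h" using diff by blast
    then have "0 < \<alpha> h \<or> 0 < \<beta> h" by auto
    then show ?thesis unfolding arc_def using h(1)
      by (metis prod.collapse)
  qed
  have cont: "\<exists>x h'. arc w x h'" if "arc u w h" for u w h
  proof -
    have h: "h \<in> {1..m}" using that by (simp add: arc_def)
    have "indeg edge m \<alpha> w + outdeg edge m \<beta> w \<noteq> 0"
    proof (cases "0 < \<alpha> h \<and> edge h = (u,w)")
      case True
      then have "indeg edge m \<alpha> w \<noteq> 0" unfolding indeg_def using h
        by (subst sum_eq_0_iff) auto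
      then show ?thesis by simp
    next
      case False
      then have "0 < \<beta> h \<and> edge h = (w,u)" using that unfolding arc_def by auto
      then have "outdeg edge m \<beta> w \<noteq> 0" unfolding outdeg_def using h
        by (subst sum_eq_0_iff) auto
      then show ?thesis by simp
    qed
    then have "indeg edge m \<beta> w + outdeg edge m \<alpha> w \<noteq> 0"
      using bal unfolding balanced_def by metis
    then have "indeg edge m \<beta> w \<noteq> 0 \<or> outdeg edge m \<alpha> w \<noteq> 0" by simp
    then show ?thesis
    proof
      assume "indeg edge m \<beta> w \<noteq> 0"
      then obtain h' where "h' \<in> {1..m}" "snd (edge h') = w" "\<beta> h' \<noteq> 0"
        unfolding indeg_def by (subst (asm) sum_eq_0_iff) auto
      then have "arc w (fst (edge h')) h'" unfolding arc_def
        by (metis gr0I prod.collapse)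
      then show ?thesis by blast
    next
      assume "outdeg edge m \<alpha> w \<noteq> 0"
      then obtain h' where "h' \<in> {1..m}" "fst (edge h') = w" "\<alpha> h' \<noteq> 0"
        unfolding outdeg_def by (subst (asm) sum_eq_0_iff) auto
      then have "arc w (snd (edge h')) h'" unfolding arc_def
        by (metis gr0I prod.collapse)
      then show ?thesis by blast
    qed
  qed
  define nxt where "nxt w = (SOME x. \<exists>h. arc w x h)" for w
  obtain u0 w0 h0 where a0: "arc u0 w0 h0" using start by blast
  define u where "u k = (nxt ^^ k) w0" for k
  have usuc: "u (Suc k) = nxt (u k)" for k by (simp add: u_def)
  have inc: "\<exists>y h. arc y (u k) h" for k
  proof (induction k)
    case 0 then show ?case using a0 by (auto simp: u_def)
  next
    case (Suc k)
    then obtain y h where "arc y (u k) h" by blast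
    from cont[OF this] have "\<exists>h. arc (u k) (nxt (u k)) h"
      unfolding nxt_def by (rule someI_ex[where P = "\<lambda>x. \<exists>h. arc (u k) x h"])
    then show ?case using usuc by metis
  qed
  have step: "\<exists>h. arc (u k) (u (Suc k)) h" for k
  proof -
    obtain y h where "arc y (u k) h" using inc by blast
    from cont[OF this] have "\<exists>h. arc (u k) (nxt (u k)) h"
      unfolding nxt_def by (rule someI_ex[where P = "\<lambda>x. \<exists>h. arc (u k) x h"])
    then show ?thesis using usuc by metis
  qed
  have urange: "u k \<in> {1..n}" for k using inc[of k] arc_range by blast
  have "\<not> inj_on u {..n}"
  proof
    assume "inj_on u {..n}"
    then have "card (u ` {..n}) = Suc n" by (simp add: card_image)
    moreover have "card (u ` {..n}) \<le> card {1..n}"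
      by (rule card_mono) (use urange in auto)
    ultimately show False by simp
  qed
  then obtain i j where "i \<noteq> j" "u i = u j" unfolding inj_on_def by blast
  then have ex: "\<exists>j. \<exists>i<j. u i = u j"
    by (metis linorder_neqE_nat)
  define j0 where "j0 = (LEAST j. \<exists>i<j. u i = u j)"
  obtain i0 where i0: "i0 < j0" "u i0 = u j0"
    using LeastI_ex[OF ex] unfolding j0_def by blast
  have mini: "u a \<noteq> u b" if "a < b" "b < j0" for a b
    using not_less_Least[of b "\<lambda>j. \<exists>i<j. u i = u j"] that unfolding j0_def by blast
  define q where "q = j0 - i0"
  define vs where "vs = map (\<lambda>k. u (i0 + k)) [0..<q]"
  define hs where "hs = map (\<lambda>k. SOME h. arc (u (i0 + k)) (u (i0 + Suc k)) h) [0..<q]"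
  have lvs: "length vs = q" "length hs = q" by (auto simp: vs_def hs_def)
  have q0: "0 < q" using i0 by (simp add: q_def)
  have vsk: "vs!k = u (i0 + k)" if "k < q" for k using that by (simp add: vs_def)
  have vsS: "vs!(Suc k mod q) = u (i0 + Suc k)" if "k < q" for k
  proof (cases "Suc k < q")
    case True then show ?thesis by (simp add: vsk)
  next
    case False
    then have "Suc k = q" using that by simp
    then show ?thesis using i0 q0 by (simp add: vsk q_def)
  qed
  have arcs: "arc (vs!k) (vs!(Suc k mod q)) (hs!k)" if "k < q" for k
  proof -
    have "hs!k = (SOME h. arc (u (i0 + k)) (u (i0 + Suc k)) h)" using that by (simp add: hs_def)
    then have "arc (u (i0 + k)) (u (i0 + Suc k)) (hs!k)"
      using someI_ex[OF step[of "i0 + k"]] by simp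
    then show ?thesis unfolding vsS[OF that] vsk[OF that] by simp
  qed
  have q2: "2 \<le> q"
  proof (rule ccontr)
    assume "\<not> 2 \<le> q"
    then have "q = 1" using q0 by simp
    then have "arc (vs!0) (vs!0) (hs!0)" using arcs[of 0] by simp
    then show False using arc_range by blast
  qed
  have dvs: "distinct vs"
    unfolding distinct_conv_nth
  proof (intro allI impI)
    fix a b assume "a < length vs" "b < length vs" "a \<noteq> b"
    then have ab: "a < q" "b < q" "a \<noteq> b" by (auto simp: lvs)
    then have "i0 + a < j0" "i0 + b < j0" by (auto simp: q_def)
    then have "u (i0 + a) \<noteq> u (i0 + b)"
      using mini[of "i0 + a" "i0 + b"] mini[of "i0 + b" "i0 + a"] ab(3)
      by (metis add_left_cancel linorder_neqE_nat nat_add_left_cancel_less)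
    then show "vs!a \<noteq> vs!b" using ab by (simp add: vsk)
  qed
  have dhs: "distinct hs"
    unfolding distinct_conv_nth
  proof (intro allI impI)
    fix a b assume ab: "a < length hs" "b < length hs" "a \<noteq> b"
    show "hs!a \<noteq> hs!b"
    proof
      assume "hs!a = hs!b"
      then have "vs!a = vs!b" using arcs[of a] arcs[of b] ab arc_tail lvs by metis
      then show False using dvs ab lvs by (simp add: nth_eq_iff_index_eq)
    qed
  qed
  have svs: "set vs \<subseteq> {1..n}" using urange by (auto simp: vs_def)
  have shs: "set hs \<subseteq> {1..m}"
  proof
    fix h assume "h \<in> set hs"
    then obtain k where "k < q" "h = hs!k" using lvs by (metis in_set_conv_nth)
    then show "h \<in> {1..m}" using arcs[of k] by (simp add: arc_def)
  qed
  have cyc: "is_cycle n m edge vs hs"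
    unfolding is_cycle_def
  proof (intro conjI allI impI)
    fix k assume "k < length vs"
    then have "arc (vs!k) (vs!(Suc k mod length vs)) (hs!k)" using arcs lvs by simp
    then show "edge (hs!k) = (vs!k, vs!(Suc k mod length vs))
             \<or> edge (hs!k) = (vs!(Suc k mod length vs), vs!k)"
      unfolding arc_def by blast
  qed (use lvs q2 dvs dhs svs shs in auto)
  have pos1: "\<forall>k\<in>Kp edge vs hs. 0 < \<alpha> (hs!k)"
  proof
    fix k assume "k \<in> Kp edge vs hs"
    then have k: "k < q" "edge (hs!k) = (vs!k, vs!(Suc k mod q))"
      by (auto simp: Kp_def fwd_def lvs)
    have "vs!k \<noteq> vs!(Suc k mod q)" using arc_range arcs[OF k(1)] by blast
    then show "0 < \<alpha> (hs!k)" using arcs[OF k(1)] k(2) unfolding arc_def by auto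
  qed
  have pos2: "\<forall>k\<in>Km edge vs hs. 0 < \<beta> (hs!k)"
  proof
    fix k assume "k \<in> Km edge vs hs"
    then have k: "k < q" "edge (hs!k) \<noteq> (vs!k, vs!(Suc k mod q))"
      by (auto simp: Km_def fwd_def lvs)
    then show "0 < \<beta> (hs!k)" using arcs[OF k(1)] unfolding arc_def by auto
  qed
  show ?thesis using cyc pos1 pos2 by blast
qed

end

lemma Emon_cong: "(\<And>h. h \<in> {1..m} \<Longrightarrow> \<alpha> h = \<alpha>' h) \<Longrightarrow> Emon m \<alpha> = Emon m \<alpha>'"
  unfolding Emon_def by (rule prod.cong) auto

lemma Emon_add: "Emon m (\<lambda>h. \<alpha> h + \<beta> h) = Emon m \<alpha> * Emon m \<beta>"
  unfolding Emon_def by (simp add: power_add prod.distrib)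

lemma Emon_delta:
  assumes "h \<in> {1..m}"
  shows "(Emon m (\<lambda>x. if x = h then 1 else 0) :: 'k::comm_ring_1 mpoly) = Var (Ev h)"
proof -
  have "(Emon m (\<lambda>x. if x = h then 1 else 0) :: 'k mpoly) = (\<Prod>x\<in>{1..m}. if x = h then Var (Ev x) else 1)"
    unfolding Emon_def by (rule prod.cong) auto
  also have "\<dots> = Var (Ev h)" using assms by (simp add: prod.delta)
  finally show ?thesis .
qed

lemma Emon_in: "Emon m \<alpha> \<in> poly_ring (Ev ` {1..m})"
  unfolding Emon_def by (intro subr_prod[OF subr_poly_ring] subr_power[OF subr_poly_ring] Var_in_poly_ring) auto

lemma indeg_add: "indeg edge m (\<lambda>h. a h + b h) v = indeg edge m a v + indeg edge m b v"
  unfolding indeg_def by (simp add: sum.distrib)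
lemma outdeg_add: "outdeg edge m (\<lambda>h. a h + b h) v = outdeg edge m a v + outdeg edge m b v"
  unfolding outdeg_def by (simp add: sum.distrib)

lemma balanced_cancel:
  assumes "balanced edge m (\<lambda>h. a h + c h) (\<lambda>h. b h + d h)" "balanced edge m c d"
  shows "balanced edge m a b"
  unfolding balanced_def
proof
  fix v
  have "indeg edge m a v + indeg edge m c v + (outdeg edge m b v + outdeg edge m d v)
      = indeg edge m b v + indeg edge m d v + (outdeg edge m a v + outdeg edge m c v)"
    using assms(1) unfolding balanced_def indeg_add outdeg_add by blast
  moreover have "indeg edge m c v + outdeg edge m d v = indeg edge m d v + outdeg edge m c v"
    using assms(2) unfolding balanced_def by blast
  ultimately show "indeg edge m a v + outdeg edge m b v = indeg edge m b v + outdeg edge m a v"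
    by linarith
qed

lemma balanced_refl: "balanced edge m c c"
  by (simp add: balanced_def)

context
  fixes n m :: nat and edge :: "nat \<Rightarrow> nat \<times> nat"
  assumes simple: "simple_digraph n m edge"
begin

lemma D2:
  assumes "balanced edge m \<alpha> \<beta>"
  shows "(Emon m \<alpha> :: 'k::comm_ring_1 mpoly) - Emon m \<beta>
     \<in> ideal_in (poly_ring (Ev ` {1..m})) {f_C edge vs hs | vs hs. is_cycle n m edge vs hs}"
  using assms
proof (induction "\<Sum>h\<in>{1..m}. \<alpha> h + \<beta> h" arbitrary: \<alpha> \<beta> rule: less_induct)
  case less
  let ?Re = "poly_ring (Ev ` {1..m}) :: 'k mpoly set"
  let ?J = "ideal_in ?Re {f_C edge vs hs | vs hs. is_cycle n m edge vs hs}"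
  have Re: "subr ?Re" by (rule subr_poly_ring)
  show ?case
  proof (cases "\<exists>h\<in>{1..m}. 0 < \<alpha> h \<and> 0 < \<beta> h")
    case True
    then obtain h where h: "h \<in> {1..m}" "0 < \<alpha> h" "0 < \<beta> h" by blast
    define \<delta> where "\<delta> x = (if x = h then 1 else 0 :: nat)" for x
    define \<alpha>' where "\<alpha>' x = \<alpha> x - \<delta> x" for x
    define \<beta>' where "\<beta>' x = \<beta> x - \<delta> x" for x
    have a: "\<alpha> = (\<lambda>x. \<alpha>' x + \<delta> x)" using h by (auto simp: \<alpha>'_def \<delta>_def)
    have b: "\<beta> = (\<lambda>x. \<beta>' x + \<delta> x)" using h by (auto simp: \<beta>'_def \<delta>_def)
    have bal': "balanced edge m \<alpha>' \<beta>'"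
      using balanced_cancel[of edge m \<alpha>' \<delta> \<beta>' \<delta>] less.prems a b balanced_refl by metis
    have lt: "(\<Sum>x\<in>{1..m}. \<alpha>' x + \<beta>' x) < (\<Sum>x\<in>{1..m}. \<alpha> x + \<beta> x)"
      by (rule sum_strict_mono_ex1) (use h in \<open>auto simp: \<alpha>'_def \<beta>'_def \<delta>_def\<close>)
    have IH: "Emon m \<alpha>' - Emon m \<beta>' \<in> ?J" using less.hyps[OF lt bal'] .
    have "(Emon m \<alpha> :: 'k mpoly) - Emon m \<beta> = Var (Ev h) * (Emon m \<alpha>' - Emon m \<beta>')"
      unfolding a b Emon_add Emon_delta[OF h(1)] \<delta>_def by (simp add: algebra_simps)
    also have "\<dots> \<in> ?J"
      by (rule ideal_mult[OF Re _ IH]) (rule Var_in_poly_ring, use h in auto)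
    finally show ?thesis .
  next
    case False
    then have disj: "\<forall>h\<in>{1..m}. \<alpha> h = 0 \<or> \<beta> h = 0" by auto
    show ?thesis
    proof (cases "\<exists>h\<in>{1..m}. \<alpha> h \<noteq> \<beta> h")
      case False
      then have "(Emon m \<alpha> :: 'k mpoly) = Emon m \<beta>" by (intro Emon_cong) auto
      then show ?thesis by (simp add: ideal_zero)
    next
      case True
      obtain vs hs where cyc: "is_cycle n m edge vs hs"
        and p1: "\<forall>k\<in>Kp edge vs hs. 0 < \<alpha> (hs!k)" and p2: "\<forall>k\<in>Km edge vs hs. 0 < \<beta> (hs!k)"
        using cycle_exists[OF simple disj True less.prems] by blast
      define gp where "gp = gam hs (Kp edge vs hs)"
      define gm where "gm = gam hs (Km edge vs hs)"
      define \<alpha>' where "\<alpha>' x = \<alpha> x - gp x" for x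
      define \<beta>' where "\<beta>' x = \<beta> x - gm x" for x
      have a: "\<alpha> = (\<lambda>x. \<alpha>' x + gp x)"
      proof
        fix x show "\<alpha> x = \<alpha>' x + gp x"
          using p1 unfolding \<alpha>'_def gp_def gam_def by (cases "x \<in> (!) hs ` Kp edge vs hs") auto
      qed
      have b: "\<beta> = (\<lambda>x. \<beta>' x + gm x)"
      proof
        fix x show "\<beta> x = \<beta>' x + gm x"
          using p2 unfolding \<beta>'_def gm_def gam_def by (cases "x \<in> (!) hs ` Km edge vs hs") auto
      qed
      have balc: "balanced edge m gp gm" unfolding gp_def gm_def by (rule cycle_balanced[OF cyc])
      have bal': "balanced edge m \<alpha>' \<beta>'"
        using balanced_cancel[of edge m \<alpha>' gp \<beta>' gm] less.prems a b balc by metis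
      have c: "length vs \<ge> 2" "length hs = length vs" "set hs \<subseteq> {1..m}"
        using cyc unfolding is_cycle_def by auto
      have "hs!0 \<in> set hs" using c by (intro nth_mem) linarith
      then have h0: "hs!0 \<in> {1..m}" using c(3) by blast
      have "0 \<in> Kp edge vs hs \<or> 0 \<in> Km edge vs hs" using c by (auto simp: Kp_def Km_def)
      then have "0 < gp (hs!0) \<or> 0 < gm (hs!0)" by (auto simp: gp_def gm_def gam_def)
      moreover have ae: "\<alpha> x = \<alpha>' x + gp x" "\<beta> x = \<beta>' x + gm x" for x
        using a b by metis+
      ultimately have ltp: "\<alpha>' (hs!0) + \<beta>' (hs!0) < \<alpha> (hs!0) + \<beta> (hs!0)" by auto
      have lt: "(\<Sum>x\<in>{1..m}. \<alpha>' x + \<beta>' x) < (\<Sum>x\<in>{1..m}. \<alpha> x + \<beta> x)"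
      proof (rule sum_strict_mono_ex1)
        show "\<forall>x\<in>{1..m}. \<alpha>' x + \<beta>' x \<le> \<alpha> x + \<beta> x"
        proof
          fix x show "\<alpha>' x + \<beta>' x \<le> \<alpha> x + \<beta> x" using ae[of x] by linarith
        qed
      qed (use h0 ltp in auto)
      have IH: "Emon m \<alpha>' - Emon m \<beta>' \<in> ?J" using less.hyps[OF lt bal'] .
      have fC: "(f_C edge vs hs :: 'k mpoly) = Emon m gp - Emon m gm"
        unfolding gp_def gm_def by (rule cycle_fC[OF cyc])
      have fJ: "f_C edge vs hs \<in> ?J" by (rule ideal_gen[OF Re]) (use cyc in blast)
      have "(Emon m \<alpha> :: 'k mpoly) - Emon m \<beta>
          = Emon m \<alpha>' * f_C edge vs hs + Emon m gm * (Emon m \<alpha>' - Emon m \<beta>')"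
        unfolding fC by (subst a, subst b, simp only: Emon_add) (simp add: algebra_simps)
      also have "\<dots> \<in> ?J"
        by (intro ideal_add[OF Re] ideal_mult[OF Re] Emon_in fJ IH)
      finally show ?thesis .
    qed
  qed
qed

end

definition wk :: "(nat \<Rightarrow> nat \<times> nat) \<Rightarrow> var \<Rightarrow> nat \<Rightarrow> (nat \<Rightarrow>\<^sub>0 int)" where
  "wk edge x k = (case x of
      Ev h \<Rightarrow> Poly_Mapping.single (snd (edge h)) (int k) - Poly_Mapping.single (fst (edge h)) (int k)
    | Vv i \<Rightarrow> Poly_Mapping.single i (int k)
    | Zv i \<Rightarrow> - Poly_Mapping.single i (int k))"

definition sig :: "(nat \<Rightarrow> nat \<times> nat) \<Rightarrow> (var \<Rightarrow>\<^sub>0 nat) \<Rightarrow> (nat \<Rightarrow>\<^sub>0 int)" where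
  "sig edge mon = (\<Sum>x\<in>Poly_Mapping.keys mon. wk edge x (Poly_Mapping.lookup mon x))"

lemma wk_0 [simp]: "wk edge x 0 = 0"
  by (cases x) (auto simp: wk_def)

lemma wk_add: "wk edge x (a + b) = wk edge x a + wk edge x b"
  by (cases x) (auto simp: wk_def single_add algebra_simps)

lemma sig_add: "sig edge (a + b) = sig edge a + sig edge b"
  unfolding sig_def by (rule setsum_keys_plus_distrib) (auto simp: wk_add)

lemma sig_0 [simp]: "sig edge 0 = 0"
  by (simp add: sig_def)

lemma sig_single1: "sig edge (Poly_Mapping.single x 1) = wk edge x 1"
  by (simp add: sig_def)

lemma Phi_Var: "Phi (sig edge) (Var x :: 'k::comm_ring_1 mpoly) = Poly_Mapping.single (wk edge x 1) 1"
  unfolding Var_def Phi_single sig_single1 ..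

lemma Phi_sig_mult: "Phi (sig edge) (p * q) = Phi (sig edge) p * Phi (sig edge) (q :: 'k::comm_ring_1 mpoly)"
  by (rule Phi_mult) (rule sig_add)

lemma Phi_gens:
  fixes edge :: "nat \<Rightarrow> nat \<times> nat"
  assumes "g \<in> {Var (Ev h) - Var (Zv (fst (edge h))) * Var (Vv (snd (edge h))) | h. h \<in> {1..m}}
      \<union> {Var (Zv i) * Var (Vv i) - 1 | i. i \<in> {1..n}}"
  shows "Phi (sig edge) (g :: 'k::comm_ring_1 mpoly) = 0"
  using assms
proof
  assume "g \<in> {Var (Ev h) - Var (Zv (fst (edge h))) * Var (Vv (snd (edge h))) | h. h \<in> {1..m}}"
  then obtain h where g: "g = Var (Ev h) - Var (Zv (fst (edge h))) * Var (Vv (snd (edge h)))" by blast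
  show ?thesis unfolding g
    by (simp add: Phi_diff Phi_sig_mult Phi_Var mult_single wk_def)
next
  assume "g \<in> {Var (Zv i) * Var (Vv i) - 1 | i. i \<in> {1..n}}"
  then obtain i where g: "g = Var (Zv i) * Var (Vv i) - 1" by blast
  have one: "Phi (sig edge) (1 :: 'k mpoly) = 1" by (rule Phi_one) simp
  show ?thesis unfolding g
    by (simp add: Phi_diff Phi_sig_mult Phi_Var mult_single wk_def one)
qed

lemma Phi_I_DE:
  assumes "f \<in> I_DE n m edge"
  shows "Phi (sig edge) (f :: 'k::comm_ring_1 mpoly) = 0"
proof -
  obtain F c where F: "finite F" "F \<subseteq> {Var (Ev h) - Var (Zv (fst (edge h))) * Var (Vv (snd (edge h))) | h. h \<in> {1..m}}
      \<union> {Var (Zv i) * Var (Vv i) - 1 | i. i \<in> {1..n}}" "f = (\<Sum>g\<in>F. c g * g)"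
    using assms unfolding I_DE_def ideal_in_def by blast
  have "Phi (sig edge) f = (\<Sum>g\<in>F. Phi (sig edge) (c g) * Phi (sig edge) g)"
    unfolding F(3) by (simp add: Phi_sum Phi_sig_mult)
  also have "\<dots> = 0"
  proof (rule sum.neutral, rule ballI)
    fix g assume "g \<in> F"
    then have "Phi (sig edge) g = 0" using F(2) by (intro Phi_gens) blast
    then show "Phi (sig edge) (c g) * Phi (sig edge) g = 0" by simp
  qed
  finally show ?thesis .
qed

lemma single_sum_exp:
  "Poly_Mapping.single (\<Sum>x\<in>A. a x) (1::'k::comm_ring_1) = (\<Prod>x\<in>A. Poly_Mapping.single (a x) 1)"
proof (induction A rule: infinite_finite_induct)
  case (insert x F)
  have "Poly_Mapping.single (\<Sum>x\<in>insert x F. a x) (1::'k) = Poly_Mapping.single (a x) 1 * Poly_Mapping.single (sum a F) 1"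
    using insert(1,2) by (simp add: mult_single)
  then show ?case using insert by simp
qed auto

lemma single_pow: "Poly_Mapping.single (Poly_Mapping.single x k) (1::'k::comm_ring_1) = Var x ^ k"
proof (induction k)
  case (Suc k)
  have "Poly_Mapping.single x (Suc k) = Poly_Mapping.single x 1 + Poly_Mapping.single x k"
    by (simp add: single_add[symmetric])
  then have "Poly_Mapping.single (Poly_Mapping.single x (Suc k)) (1::'k)
     = Poly_Mapping.single (Poly_Mapping.single x 1) 1 * Poly_Mapping.single (Poly_Mapping.single x k) 1"
    by (simp only: mult_single mult_1)
  then show ?case using Suc by (simp only: Var_def power_Suc)
qed simp

lemma single_mon:
  "Poly_Mapping.single mon (1::'k::comm_ring_1)
     = (\<Prod>x\<in>Poly_Mapping.keys mon. Var x ^ Poly_Mapping.lookup mon x)"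
proof -
  have "Poly_Mapping.single mon (1::'k) =
     Poly_Mapping.single (\<Sum>x\<in>Poly_Mapping.keys mon. Poly_Mapping.single x (Poly_Mapping.lookup mon x)) 1"
    by (simp add: pm_expand)
  then show ?thesis by (simp add: single_sum_exp single_pow)
qed

definition al :: "(var \<Rightarrow>\<^sub>0 nat) \<Rightarrow> nat \<Rightarrow> nat" where
  "al mon h = Poly_Mapping.lookup mon (Ev h)"

lemma single_mon_Emon:
  assumes "Poly_Mapping.keys mon \<subseteq> Ev ` {1..m}"
  shows "Poly_Mapping.single mon (1::'k::comm_ring_1) = Emon m (al mon)"
proof -
  have "Poly_Mapping.single mon (1::'k) = (\<Prod>x\<in>Poly_Mapping.keys mon. Var x ^ Poly_Mapping.lookup mon x)"
    by (rule single_mon)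
  also have "\<dots> = (\<Prod>x\<in>Ev ` {1..m}. Var x ^ Poly_Mapping.lookup mon x)"
    by (rule prod.mono_neutral_left) (use assms in \<open>auto simp: in_keys_iff\<close>)
  also have "\<dots> = (\<Prod>h\<in>{1..m}. Var (Ev h) ^ Poly_Mapping.lookup mon (Ev h))"
    by (rule prod.reindex[unfolded comp_def]) (auto simp: inj_on_def)
  finally show ?thesis by (simp add: Emon_def al_def)
qed

lemma lookup_sig:
  assumes "Poly_Mapping.keys mon \<subseteq> Ev ` {1..m}"
  shows "Poly_Mapping.lookup (sig edge mon) v
     = int (indeg edge m (al mon) v) - int (outdeg edge m (al mon) v)"
proof -
  have "sig edge mon = (\<Sum>x\<in>Ev ` {1..m}. wk edge x (Poly_Mapping.lookup mon x))"
    unfolding sig_def by (rule sum.mono_neutral_left) (use assms in \<open>auto simp: in_keys_iff\<close>)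
  also have "\<dots> = (\<Sum>h\<in>{1..m}. wk edge (Ev h) (al mon h))"
    unfolding al_def by (rule sum.reindex[unfolded comp_def]) (auto simp: inj_on_def)
  finally have s: "sig edge mon = \<dots>" .
  have "Poly_Mapping.lookup (sig edge mon) v
     = (\<Sum>h\<in>{1..m}. (if snd (edge h) = v then int (al mon h) else 0))
       - (\<Sum>h\<in>{1..m}. (if fst (edge h) = v then int (al mon h) else 0))"
    unfolding s by (simp add: lookup_sum wk_def lookup_minus lookup_single when_def sum_subtractf)
  also have "\<dots> = int (indeg edge m (al mon) v) - int (outdeg edge m (al mon) v)"
    unfolding indeg_def outdeg_def of_nat_sum by (simp only: sum.inter_filter[OF finite_atLeastAtMost])
  finally show ?thesis .
qed

lemma single_sum_coeff:
  "Poly_Mapping.single k (sum f A) = (\<Sum>x\<in>A. Poly_Mapping.single k (f x))"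
  by (induction A rule: infinite_finite_induct) (auto simp: single_add)

lemma lookup_Phi:
  "Poly_Mapping.lookup (Phi \<sigma> f) t = (\<Sum>a\<in>{a\<in>Poly_Mapping.keys f. \<sigma> a = t}. Poly_Mapping.lookup f a)"
  unfolding Phi_def by (simp add: lookup_sum lookup_single when_def sum.inter_filter)

theorem theorem6:
  fixes n m :: nat and edge :: "nat \<Rightarrow> nat \<times> nat"
  assumes "simple_digraph n m edge"
  shows "(I_E_D n m edge :: 'k::field_char_0 mpoly set)
           = ideal_in (poly_ring (Ev ` {1..m}))
               {f_C edge vs hs | vs hs. is_cycle n m edge vs hs}"
proof
  let ?Re = "poly_ring (Ev ` {1..m}) :: 'k mpoly set"
  let ?Rf = "poly_ring (full_vars n m) :: 'k mpoly set"
  let ?S = "{Var (Ev h) - Var (Zv (fst (edge h))) * Var (Vv (snd (edge h))) | h. h \<in> {1..m}}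
      \<union> {Var (Zv i) * Var (Vv i) - 1 | i. i \<in> {1..n}} :: 'k mpoly set"
  let ?Cyc = "{f_C edge vs hs | vs hs. is_cycle n m edge vs hs} :: 'k mpoly set"
  let ?J = "ideal_in ?Re ?Cyc"
  have Re: "subr ?Re" and Rf: "subr ?Rf" by (rule subr_poly_ring)+
  have sub: "?Re \<subseteq> ?Rf" by (rule poly_ring_mono) (auto simp: full_vars_def)
  have IDE: "I_DE n m edge = ideal_in ?Rf ?S" by (simp add: I_DE_def)
  have cycI: "?Cyc \<subseteq> ideal_in ?Rf ?S"
  proof
    fix g assume "g \<in> ?Cyc"
    then obtain vs hs where cyc: "is_cycle n m edge vs hs" and g: "g = f_C edge vs hs" by blast
    have "g = Emon m (gam hs (Kp edge vs hs)) - Emon m (gam hs (Km edge vs hs))"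
      unfolding g by (rule cycle_fC[OF cyc])
    also have "\<dots> \<in> I_DE n m edge"
      by (rule D1[OF assms cycle_balanced[OF cyc]])
    finally show "g \<in> ideal_in ?Rf ?S" unfolding IDE .
  qed
  have cycRe: "?Cyc \<subseteq> ?Re"
  proof
    fix g assume "g \<in> ?Cyc"
    then obtain vs hs where cyc: "is_cycle n m edge vs hs" and g: "g = f_C edge vs hs" by blast
    have "g = Emon m (gam hs (Kp edge vs hs)) - Emon m (gam hs (Km edge vs hs))"
      unfolding g by (rule cycle_fC[OF cyc])
    also have "\<dots> \<in> ?Re" by (intro subr_diff[OF Re] Emon_in)
    finally show "g \<in> ?Re" .
  qed
  show "?J \<subseteq> I_E_D n m edge"
    unfolding I_E_D_def IDE
    using ideal_in_mono[OF Rf sub cycI] ideal_in_sub[OF Re cycRe] by blast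
  show "I_E_D n m edge \<subseteq> ?J"
  proof
    fix f :: "'k mpoly" assume "f \<in> I_E_D n m edge"
    then have fI: "f \<in> I_DE n m edge" and fRe: "f \<in> ?Re" by (auto simp: I_E_D_def)
    have Phi0: "Phi (sig edge) f = 0" by (rule Phi_I_DE[OF fI])
    let ?K = "Poly_Mapping.keys f"
    let ?c = "Poly_Mapping.lookup f"
    have keysK: "Poly_Mapping.keys mon \<subseteq> Ev ` {1..m}" if "mon \<in> ?K" for mon
      using fRe that unfolding poly_ring_def by blast
    define R where "R t = (SOME r. r \<in> ?K \<and> sig edge r = t)" for t
    have Rp: "R (sig edge mon) \<in> ?K \<and> sig edge (R (sig edge mon)) = sig edge mon" if "mon \<in> ?K" for mon
      unfolding R_def by (rule someI[of "\<lambda>r. r \<in> ?K \<and> sig edge r = sig edge mon"]) (use that in auto)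
    have split: "f = (\<Sum>mon\<in>?K. Poly_Mapping.single mon (?c mon) - Poly_Mapping.single (R (sig edge mon)) (?c mon))
                   + (\<Sum>mon\<in>?K. Poly_Mapping.single (R (sig edge mon)) (?c mon))"
      by (simp add: sum_subtractf pm_expand)
    have zero: "(\<Sum>mon\<in>?K. Poly_Mapping.single (R (sig edge mon)) (?c mon)) = 0"
    proof -
      have "(\<Sum>mon\<in>?K. Poly_Mapping.single (R (sig edge mon)) (?c mon))
          = (\<Sum>t\<in>sig edge ` ?K. \<Sum>mon\<in>{x. x \<in> ?K \<and> sig edge x = t}. Poly_Mapping.single (R (sig edge mon)) (?c mon))"
        by (rule sum.image_gen) simp
      also have "\<dots> = (\<Sum>t\<in>sig edge ` ?K. \<Sum>mon\<in>{x. x \<in> ?K \<and> sig edge x = t}. Poly_Mapping.single (R t) (?c mon))"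
        by (intro sum.cong refl) auto
      also have "\<dots> = (\<Sum>t\<in>sig edge ` ?K. Poly_Mapping.single (R t) (Poly_Mapping.lookup (Phi (sig edge) f) t))"
        by (intro sum.cong refl) (simp add: single_sum_coeff lookup_Phi)
      also have "\<dots> = 0" by (simp add: Phi0)
      finally show ?thesis .
    qed
    have terms: "Poly_Mapping.single mon (?c mon) - Poly_Mapping.single (R (sig edge mon)) (?c mon) \<in> ?J"
      if mon: "mon \<in> ?K" for mon
    proof -
      define r where "r = R (sig edge mon)"
      have r: "r \<in> ?K" "sig edge r = sig edge mon" using Rp[OF mon] by (auto simp: r_def)
      have bal: "balanced edge m (al mon) (al r)"
        unfolding balanced_def
      proof
        fix v
        have "Poly_Mapping.lookup (sig edge mon) v = Poly_Mapping.lookup (sig edge r) v" using r by simp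
        then have "int (indeg edge m (al mon) v) - int (outdeg edge m (al mon) v)
            = int (indeg edge m (al r) v) - int (outdeg edge m (al r) v)"
          using lookup_sig[OF keysK[OF mon]] lookup_sig[OF keysK[OF r(1)]] by simp
        then show "indeg edge m (al mon) v + outdeg edge m (al r) v = indeg edge m (al r) v + outdeg edge m (al mon) v"
          by linarith
      qed
      have "Poly_Mapping.single mon (?c mon) - Poly_Mapping.single r (?c mon)
          = Poly_Mapping.single 0 (?c mon) * (Poly_Mapping.single mon 1 - Poly_Mapping.single r 1)"
        by (simp add: right_diff_distrib mult_single)
      also have "\<dots> = Poly_Mapping.single 0 (?c mon) * (Emon m (al mon) - Emon m (al r))"
        by (simp add: single_mon_Emon[OF keysK[OF mon]] single_mon_Emon[OF keysK[OF r(1)]])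
      also have "\<dots> \<in> ?J"
        by (rule ideal_mult[OF Re single0_in_poly_ring D2[OF assms bal]])
      finally show ?thesis unfolding r_def .
    qed
    have "f \<in> ?J"
      by (subst split, unfold zero add_0_right) (rule ideal_sum[OF Re], rule terms)
    then show "f \<in> ?J" .
  qed
qed

end
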